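(* Let $\gamma>0$ and let $S\subset(0,1)$ be a set of size $d$, and let $\mathbf{x}\in[0,1]^d$ list the elements of $S$ in a uniformly random order. Then the following procedure is "successful" with probability at least $1-\exp(-\Omega(d^{2\gamma}))$, and whenever it is successful it outputs $\operatorname{med}(\mathbf{x})$. Procedure: (1) partition the $d$ entries of $\mathbf{x}$ into consecutive blocks $\mathbf{x}_1,\dots,\mathbf{x}_q$ of size $\lceil d^{2/3}\rceil$ (the last block possibly smaller); for $i\in[q-1]$ let $\mathbf{y}_i$ consist of the elements of $\mathbf{x}_i$ whose ranks within $\mathbf{x}_i$ belong to $\{\lfloor \frac{d^{2/3}}{2}-d^{\frac13+\gamma}\rfloor,\dots,\lceil \frac{d^{2/3}}{2}+d^{\frac13+\gamma}\rceil\}$, and let $\mathbf{y}_q=\mathbf{x}_q$; (2) compare each entry of the concatenation $(\mathbf{y}_1,\dots,\mathbf{y}_q)$ with all entries of $\mathbf{x}$, and output the entry that is larger than exactly $d/2-1$ entries of $\mathbf{x}$ (if none exists, the procedure fails). The procedure is called successful if some $\mathbf{y}_i$, $i\in[q]$, contains $\operatorname{med}(\mathbf{x})$.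
   Context: $\operatorname{med}(\mathbf{x})$ denotes the median of the entries of $\mathbf{x}$ (the element of rank $d/2$ in ascending order). Ranks are positions in ascending sorted order. *)

theory Defs
  imports Complex_Main "HOL-Combinatorics.Multiset_Permutations"
begin

text \<open>Median: the element of rank ceil(d/2) (1-indexed, ascending order) of a list of
  length d; for even d this is the element of rank d/2.\<close>
definition med :: "real list \<Rightarrow> real" where
  "med xs = sort xs ! ((length xs - 1) div 2)"

definition rank_in :: "real list \<Rightarrow> real \<Rightarrow> nat" where
  "rank_in ys v = card {u \<in> set ys. u \<le> v}"

definition blksz :: "nat \<Rightarrow> nat" where
  "blksz d = nat \<lceil>real d powr (2/3)\<rceil>"

definition nblocks :: "nat \<Rightarrow> nat" where
  "nblocks d = (d + blksz d - 1) div blksz d"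

text \<open>The i-th block (0-indexed, i < nblocks d) of consecutive entries.\<close>
definition blk :: "real list \<Rightarrow> nat \<Rightarrow> real list" where
  "blk xs i = take (blksz (length xs)) (drop (i * blksz (length xs)) xs)"

definition win_lo :: "real \<Rightarrow> nat \<Rightarrow> int" where
  "win_lo \<gamma> d = \<lfloor>real d powr (2/3) / 2 - real d powr (1/3 + \<gamma>)\<rfloor>"

definition win_hi :: "real \<Rightarrow> nat \<Rightarrow> int" where
  "win_hi \<gamma> d = \<lceil>real d powr (2/3) / 2 + real d powr (1/3 + \<gamma>)\<rceil>"

definition yblk :: "real \<Rightarrow> real list \<Rightarrow> nat \<Rightarrow> real list" where
  "yblk \<gamma> xs i =
     (if i + 1 = nblocks (length xs) then blk xs i
      else filter (\<lambda>v. win_lo \<gamma> (length xs) \<le> int (rank_in (blk xs i) v)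
                       \<and> int (rank_in (blk xs i) v) \<le> win_hi \<gamma> (length xs)) (blk xs i))"

text \<open>Output of the procedure: the first entry of (y_1,...,y_q) larger than exactly
  ceil(d/2) - 1 entries of xs (= d/2 - 1 for even d); None means failure.\<close>
definition proc_output :: "real \<Rightarrow> real list \<Rightarrow> real option" where
  "proc_output \<gamma> xs =
     find (\<lambda>v. card {u \<in> set xs. u < v} = (length xs + 1) div 2 - 1)
          (concat (map (yblk \<gamma> xs) [0..<nblocks (length xs)]))"

definition successful :: "real \<Rightarrow> real list \<Rightarrow> bool" where
  "successful \<gamma> xs = (\<exists>i < nblocks (length xs). med xs \<in> set (yblk \<gamma> xs i))"

end

theory Submission
  imports Defs
begin


lemma count_prefix:
  assumes "finite S" "m \<le> card S"
  shows "card {xs \<in> permutations_of_set S. Q (set (take m xs))}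
         \<le> card {T. T \<subseteq> S \<and> card T = m \<and> Q T} * (fact m * fact (card S - m))"
proof -
  let ?F = "\<lambda>T. (\<lambda>(ys,zs). ys @ zs) ` (permutations_of_set T \<times> permutations_of_set (S - T))"
  let ?BT = "{T. T \<subseteq> S \<and> card T = m \<and> Q T}"
  have sub: "{xs \<in> permutations_of_set S. Q (set (take m xs))} \<subseteq> (\<Union>T\<in>?BT. ?F T)"
  proof
    fix xs assume "xs \<in> {xs \<in> permutations_of_set S. Q (set (take m xs))}"
    then have xs: "set xs = S" "distinct xs" "Q (set (take m xs))"
      by (auto simp: permutations_of_set_def)
    have len: "length xs = card S" using distinct_card xs by metis
    let ?T = "set (take m xs)"
    have T1: "?T \<subseteq> S" using xs(1) set_take_subset by metis
    have T2: "card ?T = m" using distinct_card[of "take m xs"] xs len assms by simp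
    have p1: "take m xs \<in> permutations_of_set ?T" using xs by (auto intro: distinct_take)
    have "set (take m xs) \<inter> set (drop m xs) = {}"
      using xs(2) by (metis append_take_drop_id distinct_append)
    moreover have "set xs = set (take m xs) \<union> set (drop m xs)"
      by (metis append_take_drop_id set_append)
    ultimately have "set (drop m xs) = S - ?T" using xs by blast
    then have p2: "drop m xs \<in> permutations_of_set (S - ?T)" using xs
      by (auto intro: distinct_drop)
    have "xs \<in> ?F ?T"
      using p1 p2 by (auto intro!: image_eqI[where x="(take m xs, drop m xs)"])
    then show "xs \<in> (\<Union>T\<in>?BT. ?F T)" using T1 T2 xs(3) by blast
  qed
  have finBT: "finite ?BT" using assms(1) by (rule finite_subset[rotated, OF finite_Pow_iff[THEN iffD2]]) auto
  have "card {xs \<in> permutations_of_set S. Q (set (take m xs))} \<le> card (\<Union>T\<in>?BT. ?F T)"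
    by (rule card_mono[OF _ sub]) (use finBT in auto)
  also have "\<dots> \<le> (\<Sum>T\<in>?BT. card (?F T))" by (rule card_UN_le[OF finBT])
  also have "\<dots> \<le> (\<Sum>T\<in>?BT. fact m * fact (card S - m))"
  proof (rule sum_mono)
    fix T assume T: "T \<in> ?BT"
    then have fT: "finite T" using assms(1) finite_subset by blast
    have "card (?F T) \<le> card (permutations_of_set T \<times> permutations_of_set (S - T))"
      by (rule card_image_le) simp
    also have "\<dots> = fact (card T) * fact (card (S - T))"
      using fT assms(1) by (simp add: card_cartesian_product)
    also have "\<dots> = fact m * fact (card S - m)" using T fT by (simp add: card_Diff_subset)
    finally show "card (?F T) \<le> fact m * fact (card S - m)" .
  qed
  also have "\<dots> = card ?BT * (fact m * fact (card S - m))" by simp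
  finally show ?thesis .
qed

lemma count_subsets:
  assumes "finite S" "L \<subseteq> S"
  shows "card {T. T \<subseteq> S \<and> card T = m \<and> a \<le> card (L \<inter> T)}
    \<le> (\<Sum>j\<in>{a..m}. (card L choose j) * (card (S - L) choose (m - j)))"
proof -
  let ?G = "\<lambda>j. (\<lambda>(A,B). A \<union> B) ` ({A. A \<subseteq> L \<and> card A = j} \<times> {B. B \<subseteq> S - L \<and> card B = m - j})"
  have sub: "{T. T \<subseteq> S \<and> card T = m \<and> a \<le> card (L \<inter> T)} \<subseteq> (\<Union>j\<in>{a..m}. ?G j)"
  proof
    fix T assume "T \<in> {T. T \<subseteq> S \<and> card T = m \<and> a \<le> card (L \<inter> T)}"
    then have T: "T \<subseteq> S" "card T = m" "a \<le> card (L \<inter> T)" by auto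
    have fT: "finite T" using T(1) assms(1) finite_subset by blast
    have c: "card T = card (L \<inter> T) + card (T - L)"
      by (metis Int_commute Diff_Diff_Int card_Diff_subset_Int card_Int_Diff fT)
    have "T = (L \<inter> T) \<union> (T - L)" by blast
    moreover have "(L \<inter> T, T - L) \<in> {A. A \<subseteq> L \<and> card A = card (L \<inter> T)} \<times> {B. B \<subseteq> S - L \<and> card B = m - card (L \<inter> T)}"
      using T c by auto
    ultimately have "T \<in> ?G (card (L \<inter> T))" by (metis (no_types, lifting) case_prod_conv image_eqI)
    moreover have "card (L \<inter> T) \<in> {a..m}" using T c by auto
    ultimately show "T \<in> (\<Union>j\<in>{a..m}. ?G j)" by blast
  qed
  have fL: "finite L" using assms finite_subset by blast
  have "card {T. T \<subseteq> S \<and> card T = m \<and> a \<le> card (L \<inter> T)} \<le> card (\<Union>j\<in>{a..m}. ?G j)"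
    by (rule card_mono[OF _ sub]) (use fL assms(1) in auto)
  also have "\<dots> \<le> (\<Sum>j\<in>{a..m}. card (?G j))" by (rule card_UN_le) simp
  also have "\<dots> \<le> (\<Sum>j\<in>{a..m}. (card L choose j) * (card (S - L) choose (m - j)))"
  proof (rule sum_mono)
    fix j
    have "card (?G j) \<le> card ({A. A \<subseteq> L \<and> card A = j} \<times> {B. B \<subseteq> S - L \<and> card B = m - j})"
      by (rule card_image_le) (use fL assms(1) in auto)
    also have "\<dots> = (card L choose j) * (card (S - L) choose (m - j))"
      using fL assms(1) by (simp add: card_cartesian_product n_subsets)
    finally show "card (?G j) \<le> (card L choose j) * (card (S - L) choose (m - j))" .
  qed
  finally show ?thesis .
qed



lemma binom_step: "(Suc k) * (n choose (Suc k)) = (n - k) * (n choose k)"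
  using times_binomial_minus1_eq[of "Suc k" n] binomial_absorb_comp[of n k] by simp

lemma ratio:
  fixes K H m j :: nat
  assumes "K \<le> H + 2" "m + 1 \<le> 2*j" "j + 1 \<le> m"
  shows "real ((K choose (j+1)) * (H choose (m-(j+1)))) * (j+1)
         \<le> real ((K choose j) * (H choose (m-j))) * (m - j)"
proof (cases "m - (j+1) \<le> H")
  case False
  then have z: "H choose (m - Suc j) = 0" by simp
  show ?thesis by (simp add: z)
next
  case True
  define a where "a = real (K choose j)"
  define b where "b = real (H choose (m-(j+1)))"
  define X where "X = H - (m-(j+1))"
  have e1: "real (K choose (j+1)) * (j+1) = a * (K - j)"
    using binom_step[of j K] unfolding a_def
    by (metis Suc_eq_plus1 mult.commute of_nat_mult)
  have mj: "m - j = Suc (m - (j+1))" using assms by simp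
  have e2: "real (H choose (m - j)) * real (m - j) = b * X"
    using binom_step[of "m - (j+1)" H] unfolding b_def X_def mj
    by (metis mult.commute of_nat_mult)
  have kx: "K - j \<le> X" unfolding X_def using assms True by linarith
  have ab: "a \<ge> 0" "b \<ge> 0" unfolding a_def b_def by auto
  have "real ((K choose (j+1)) * (H choose (m-(j+1)))) * (j+1)
     = (real (K choose (j+1)) * (j+1)) * b" unfolding b_def by (simp add: algebra_simps)
  also have "\<dots> = a * b * (K - j)" by (simp only: e1) (simp add: algebra_simps)
  also have "\<dots> \<le> a * b * X" using kx ab by (intro mult_left_mono) auto
  also have "\<dots> = real ((K choose j) * (H choose (m-j))) * (m - j)"
    using e2 unfolding a_def by (simp add: algebra_simps of_nat_diff)
  finally show ?thesis using assms by (simp add: of_nat_diff)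
qed

lemma decay:
  fixes K H m j1 :: nat
  assumes "K \<le> H + 2" "m + 1 \<le> 2*j1" "j1 \<le> j" "j \<le> m"
  shows "real ((K choose j) * (H choose (m-j)))
         \<le> real ((K choose j1) * (H choose (m-j1))) * ((real m - j1)/(j1+1))^(j - j1)"
proof -
  define f where "f = (\<lambda>j. real ((K choose j) * (H choose (m-j))))"
  define \<rho> where "\<rho> = (real m - j1)/(j1+1)"
  have \<rho>0: "\<rho> \<ge> 0" unfolding \<rho>_def using assms by auto
  obtain i where j: "j = j1 + i" using assms(3) le_Suc_ex by blast
  have "j1 + i \<le> m \<Longrightarrow> f (j1 + i) \<le> f j1 * \<rho> ^ i"
  proof (induction i)
    case 0 then show ?case by simp
  next
    case (Suc i)
    let ?n = "j1 + i"
    have r: "f (?n+1) * (?n+1) \<le> f ?n * (m - ?n)"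
      unfolding f_def using ratio[of K H m ?n] assms Suc.prems by (simp add: of_nat_diff)
    have fpos: "f ?n \<ge> 0" unfolding f_def by simp
    have q: "(real m - ?n) / (?n + 1) \<le> \<rho>"
    proof -
      have e: "(real m - j1)*(?n+1) - (real m - ?n)*(j1+1) = (real m+1)*(real ?n - j1)"
        by (simp add: algebra_simps)
      have "(real m+1)*(real ?n - j1) \<ge> 0" by simp
      then have "(real m - ?n)*(j1+1) \<le> (real m - j1)*(?n+1)" using e by linarith
      then show ?thesis unfolding \<rho>_def by (simp add: divide_simps)
    qed
    have "f (?n+1) \<le> f ?n * ((real m - ?n) / (?n + 1))"
      using r Suc.prems by (simp add: divide_simps of_nat_diff)
    also have "\<dots> \<le> f ?n * \<rho>" using q fpos by (rule mult_left_mono)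
    also have "\<dots> \<le> f j1 * \<rho> ^ i * \<rho>" using Suc.IH Suc.prems \<rho>0 by (intro mult_right_mono) auto
    finally show ?case by (simp add: algebra_simps)
  qed
  then show ?thesis using assms j unfolding f_def \<rho>_def by simp
qed

lemma tail_sum:
  fixes K H m j1 a :: nat
  assumes "K \<le> H + 2" "m + 1 \<le> 2*j1" "j1 \<le> a" "a \<le> m"
  shows "real (\<Sum>j\<in>{a..m}. (K choose j) * (H choose (m-j)))
         \<le> (m+1) * real ((K+H) choose m) * ((real m - j1)/(j1+1))^(a - j1)"
proof -
  note True = assms(4)
  define \<rho> where "\<rho> = (real m - j1)/(j1+1)"
  have \<rho>0: "\<rho> \<ge> 0" "\<rho> \<le> 1" unfolding \<rho>_def using assms True by (auto simp: divide_simps)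
  have fj1: "real ((K choose j1) * (H choose (m-j1))) \<le> real ((K+H) choose m)"
  proof -
    have "(K choose j1) * (H choose (m-j1)) \<le> (\<Sum>k\<le>m. (K choose k) * (H choose (m - k)))"
      by (rule member_le_sum) (use assms True in auto)
    then show ?thesis by (simp add: vandermonde) (metis of_nat_mult of_nat_le_iff)
  qed
  have "real (\<Sum>j\<in>{a..m}. (K choose j) * (H choose (m-j)))
      = (\<Sum>j\<in>{a..m}. real ((K choose j) * (H choose (m-j))))" by simp
  also have "\<dots> \<le> (\<Sum>j\<in>{a..m}. real ((K+H) choose m) * \<rho>^(a - j1))"
  proof (rule sum_mono)
    fix j assume j: "j \<in> {a..m}"
    have "real ((K choose j) * (H choose (m-j)))
         \<le> real ((K choose j1) * (H choose (m-j1))) * \<rho>^(j - j1)"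
      unfolding \<rho>_def using decay[of K H m j1 j] assms j by auto
    also have "\<dots> \<le> real ((K+H) choose m) * \<rho>^(j - j1)"
      using fj1 \<rho>0 by (intro mult_right_mono) auto
    also have "\<dots> \<le> real ((K+H) choose m) * \<rho>^(a - j1)"
      using \<rho>0 j by (intro mult_left_mono power_decreasing) auto
    finally show "real ((K choose j) * (H choose (m-j))) \<le> real ((K+H) choose m) * \<rho>^(a - j1)" .
  qed
  also have "\<dots> = card {a..m} * (real ((K+H) choose m) * \<rho>^(a - j1))" by simp
  also have "\<dots> \<le> (m+1) * (real ((K+H) choose m) * \<rho>^(a - j1))"
    using \<rho>0 by (intro mult_right_mono) auto
  finally show ?thesis unfolding \<rho>_def by (simp add: algebra_simps)
qed



lemma rho_bound:
  fixes m j1 n :: nat and t :: real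
  assumes "j1 \<le> m" "real n \<ge> t/3" "2*real j1 + 1 - m \<ge> 2*t/3" "t \<ge> 0"
  shows "((real m - j1)/(j1+1))^n \<le> exp (-(2*t^2)/(9*(m+1)))"
proof -
  define x where "x = (2*real j1 + 1 - m)/(j1+1)"
  have r: "(real m - j1)/(j1+1) = 1 - x" unfolding x_def by (simp add: field_simps)
  have r0: "0 \<le> 1 - x" using r assms(1) by (metis divide_nonneg_nonneg of_nat_0_le_iff of_nat_le_iff diff_ge_0_iff_ge)
  have "1 - x \<le> exp (-x)" using exp_ge_add_one_self[of "-x"] by simp
  then have "(1 - x)^n \<le> exp (-x)^n" using r0 by (intro power_mono) auto
  also have "\<dots> = exp (-(n*x))" by (simp add: exp_of_nat_mult[symmetric])
  also have "\<dots> \<le> exp (-(2*t^2)/(9*(m+1)))"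
  proof -
    have x1: "x \<ge> (2*t/3)/(m+1)"
    proof -
      have "(2*t/3)/(m+1) \<le> (2*t/3)/(j1+1)"
        using assms by (intro divide_left_mono) auto
      also have "\<dots> \<le> x" unfolding x_def using assms by (intro divide_right_mono) auto
      finally show ?thesis .
    qed
    have h1: "(t/3) * ((2*t/3)/(m+1)) \<le> n * x"
      using x1 assms by (intro mult_mono) auto
    have h2: "(t/3) * ((2*t/3)/(m+1)) = (2*t^2)/(9*(m+1))"
      by (simp add: field_simps power2_eq_square)
    have "(2*t^2)/(9*(m+1)) \<le> n * x" using h1 unfolding h2 .
    then show ?thesis by simp
  qed
  finally show ?thesis using r by simp
qed

lemma tail_perm:
  assumes "finite S" "L \<subseteq> S" "card L \<le> card (S - L) + 2" "m \<le> card S" "t \<ge> 5"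
    "real a \<ge> (real m - 1)/2 + t"
  shows "real (card {xs \<in> permutations_of_set S. a \<le> card (L \<inter> set (take m xs))})
    \<le> fact (card S) * (m+1) * exp (-(2*t^2)/(9*(m+1)))"
proof (cases "a \<le> m")
  case False
  have E: "{xs \<in> permutations_of_set S. a \<le> card (L \<inter> set (take m xs))} = {}"
  proof -
    have "card (L \<inter> set (take m xs)) \<le> m" for xs :: "'a list"
    proof -
      have "card (L \<inter> set (take m xs)) \<le> card (set (take m xs))" by (intro card_mono) auto
      also have "\<dots> \<le> length (take m xs)" by (rule card_length)
      finally show ?thesis by simp
    qed
    then show ?thesis using False by (auto dest: le_trans)
  qed
  show ?thesis unfolding E by simp
next
  case True
  define d where "d = card S"
  define K where "K = card L"
  define H where "H = card (S - L)"
  have KH: "K + H = d" unfolding K_def H_def d_def using assms(1,2)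
    by (metis card_Diff_subset finite_subset le_add_diff_inverse card_mono)
  define j1 where "j1 = nat \<lceil>real m/2 + t/3\<rceil>"
  have j1a: "real j1 \<ge> real m/2 + t/3" unfolding j1_def using assms(5) by linarith
  have j1b: "real j1 < real m/2 + t/3 + 1" unfolding j1_def using assms(5) by linarith
  have j1c: "m + 1 \<le> 2*j1" using j1a assms(5) by linarith
  have "(real m - 1)/2 = real m/2 - 1/2" by (simp add: field_simps)
  then have "real j1 \<le> real a" using j1b assms(5,6) by linarith
  then have j1d: "j1 \<le> a" by simp
  define \<rho> where "\<rho> = (real m - j1)/(j1+1)"
  have "card {xs \<in> permutations_of_set S. a \<le> card (L \<inter> set (take m xs))}
     \<le> card {T. T \<subseteq> S \<and> card T = m \<and> a \<le> card (L \<inter> T)} * (fact m * fact (card S - m))"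
    by (rule count_prefix[OF assms(1,4)])
  also have "\<dots> \<le> (\<Sum>j\<in>{a..m}. (K choose j) * (H choose (m - j))) * (fact m * fact (card S - m))"
    unfolding K_def H_def by (intro mult_right_mono count_subsets assms) auto
  finally have n1: "card {xs \<in> permutations_of_set S. a \<le> card (L \<inter> set (take m xs))}
     \<le> (\<Sum>j\<in>{a..m}. (K choose j) * (H choose (m - j))) * (fact m * fact (card S - m))" .
  have c1: "real (card {xs \<in> permutations_of_set S. a \<le> card (L \<inter> set (take m xs))})
     \<le> real (\<Sum>j\<in>{a..m}. (K choose j) * (H choose (m - j))) * (fact m * fact (d - m))"
    using of_nat_mono[OF n1, where 'a=real] unfolding d_def by (simp only: of_nat_mult of_nat_fact)
  note c1
  also have "\<dots> \<le> ((m+1) * real (d choose m) * \<rho>^(a - j1)) * (fact m * fact (d - m))"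
    unfolding \<rho>_def KH[symmetric]
    by (intro mult_right_mono tail_sum) (use assms True j1c j1d K_def H_def in auto)
  also have "\<dots> = fact d * (m+1) * \<rho>^(a - j1)"
  proof -
    have e: "fact m * fact (d - m) * real (d choose m) = fact d"
      using binomial_fact_lemma[of m d] assms(4) unfolding d_def by (metis of_nat_fact of_nat_mult)
    have "((m+1) * real (d choose m) * \<rho>^(a - j1)) * (fact m * fact (d - m))
       = (fact m * fact (d - m) * real (d choose m)) * ((m+1) * \<rho>^(a - j1))" by (simp only: mult_ac)
    also have "\<dots> = fact d * ((m+1) * \<rho>^(a - j1))" by (simp only: e)
    finally show ?thesis by (simp add: algebra_simps)
  qed
  also have "\<dots> \<le> fact d * (m+1) * exp (-(2*t^2)/(9*(m+1)))"
  proof -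
    have "\<rho>^(a - j1) \<le> exp (-(2*t^2)/(9*(m+1)))" unfolding \<rho>_def
    proof (rule rho_bound)
      show "j1 \<le> m" using j1d True by simp
      have h: "real a \<ge> real m/2 - 1/2 + t" using assms(6) by (simp add: field_simps)
      have "real (a - j1) = real a - real j1" using j1d by (simp add: of_nat_diff)
      then show "real (a - j1) \<ge> t/3" using h j1b assms(5) by linarith
      show "2*real j1 + 1 - m \<ge> 2*t/3" using j1a by linarith
      show "t \<ge> 0" using assms(5) by simp
    qed
    then show ?thesis by (intro mult_left_mono) auto
  qed
  finally show ?thesis unfolding d_def by (simp add: algebra_simps)
qed



lemma sorted_rank:
  fixes S :: "real set"
  assumes "finite S" "i < card S"
  shows "card {u \<in> S. u < sorted_list_of_set S ! i} = i"
proof -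
  define sl where "sl = sorted_list_of_set S"
  have sl: "set sl = S" "distinct sl" "length sl = card S" "sorted_wrt (<) sl"
    unfolding sl_def using assms(1)
    by (auto simp: set_sorted_list_of_set distinct_sorted_list_of_set
        length_sorted_list_of_set strict_sorted_list_of_set)
  have lt: "\<And>j k. j < length sl \<Longrightarrow> k < length sl \<Longrightarrow> sl ! j < sl ! k \<longleftrightarrow> j < k"
  proof -
    fix j k assume jk: "j < length sl" "k < length sl"
    show "sl ! j < sl ! k \<longleftrightarrow> j < k"
    proof
      assume "j < k" then show "sl ! j < sl ! k" using sl(4) jk by (auto simp: sorted_wrt_iff_nth_less)
    next
      assume a: "sl ! j < sl ! k"
      show "j < k"
      proof (rule ccontr)
        assume "\<not> j < k"
        then have "k < j \<or> k = j" by auto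
        then show False
        proof
          assume "k < j" then have "sl ! k < sl ! j" using sl(4) jk by (auto simp: sorted_wrt_iff_nth_less)
          then show False using a by simp
        next
          assume "k = j" then show False using a by simp
        qed
      qed
    qed
  qed
  have "{u \<in> S. u < sl ! i} = (\<lambda>j. sl ! j) ` {..<i}"
  proof
    show "{u \<in> S. u < sl ! i} \<subseteq> (\<lambda>j. sl ! j) ` {..<i}"
    proof
      fix u assume u: "u \<in> {u \<in> S. u < sl ! i}"
      then obtain j where j: "j < length sl" "u = sl ! j" using sl(1) by (auto simp: in_set_conv_nth)
      then have "j < i" using lt[of j i] u sl(3) assms(2) by auto
      then show "u \<in> (\<lambda>j. sl ! j) ` {..<i}" using j by auto
    qed
  next
    show "(\<lambda>j. sl ! j) ` {..<i} \<subseteq> {u \<in> S. u < sl ! i}"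
      using lt sl assms(2) by auto
  qed
  moreover have "inj_on (\<lambda>j. sl ! j) {..<i}"
    using inj_on_nth[OF sl(2), of "{..<i}"] sl(3) assms(2) by auto
  ultimately show ?thesis unfolding sl_def by (simp add: card_image)
qed

lemma rank_unique:
  fixes S :: "real set"
  assumes "finite S" "v \<in> S" "w \<in> S" "card {u \<in> S. u < v} = card {u \<in> S. u < w}"
  shows "v = w"
proof (rule ccontr)
  assume "v \<noteq> w"
  then have "v < w \<or> w < v" by auto
  then show False
  proof
    assume "v < w"
    then have "{u \<in> S. u < v} \<subset> {u \<in> S. u < w}" using assms by auto
    then have "card {u \<in> S. u < v} < card {u \<in> S. u < w}" using assms(1) by (intro psubset_card_mono) auto
    then show False using assms by simp
  next
    assume "w < v"
    then have "{u \<in> S. u < w} \<subset> {u \<in> S. u < v}" using assms by auto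
    then have "card {u \<in> S. u < w} < card {u \<in> S. u < v}" using assms(1) by (intro psubset_card_mono) auto
    then show False using assms by simp
  qed
qed

lemma med_perm:
  assumes "xs \<in> permutations_of_set S"
  shows "med xs = sorted_list_of_set S ! ((card S - 1) div 2)"
proof -
  have xs: "set xs = S" "distinct xs" using assms by (auto simp: permutations_of_set_def)
  then have "sort xs = sorted_list_of_set S"
    using sorted_list_of_set_sort_remdups[of xs] by (simp add: distinct_remdups_id)
  moreover have "length xs = card S" using xs distinct_card by metis
  ultimately show ?thesis unfolding med_def by simp
qed

lemma med_in:
  assumes "xs \<in> permutations_of_set S" "xs \<noteq> []"
  shows "med xs \<in> S" "card {u \<in> S. u < med xs} = (card S - 1) div 2"
proof -
  have xs: "set xs = S" "distinct xs" using assms by (auto simp: permutations_of_set_def)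
  have fS: "finite S" using xs by auto
  have len: "length xs = card S" using xs distinct_card by metis
  have i: "(card S - 1) div 2 < card S" using assms(2) len by (cases "card S") auto
  show "med xs \<in> S" unfolding med_perm[OF assms(1)]
    using i fS by (metis nth_mem set_sorted_list_of_set length_sorted_list_of_set)
  show "card {u \<in> S. u < med xs} = (card S - 1) div 2"
    unfolding med_perm[OF assms(1)] using sorted_rank[OF fS i] .
qed

lemma set_blk: "set (blk xs i) \<subseteq> set xs"
  unfolding blk_def by (meson set_drop_subset set_take_subset subset_trans)

lemma set_yblk: "set (yblk \<gamma> xs i) \<subseteq> set xs"
  unfolding yblk_def using set_blk by auto

lemma part2:
  assumes "finite S" "S \<subseteq> {0<..<1}" "xs \<in> permutations_of_set S" "successful \<gamma> xs"
  shows "proc_output \<gamma> xs = Some (med xs)"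
proof -
  have xs: "set xs = S" "distinct xs" using assms by (auto simp: permutations_of_set_def)
  have len: "length xs = card S" using xs distinct_card by metis
  define ys where "ys = concat (map (yblk \<gamma> xs) [0..<nblocks (length xs)])"
  define P where "P = (\<lambda>v. card {u \<in> set xs. u < v} = (length xs + 1) div 2 - 1)"
  obtain i where i: "i < nblocks (length xs)" "med xs \<in> set (yblk \<gamma> xs i)"
    using assms(4) unfolding successful_def by blast
  have ne: "xs \<noteq> []" using i(2) set_yblk by fastforce
  have mys: "med xs \<in> set ys" unfolding ys_def using i by auto
  have ysxs: "set ys \<subseteq> S" unfolding ys_def using set_yblk xs by fastforce
  have eqk: "(length xs + 1) div 2 - 1 = (card S - 1) div 2" using len ne by (cases "length xs") auto
  have Pm: "P (med xs)" unfolding P_def eqk xs(1) using med_in[OF assms(3) ne] by simp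
  have "find P ys \<noteq> None" using mys Pm by (auto simp: find_None_iff)
  then obtain y where y: "find P ys = Some y" by auto
  then obtain j where j: "j < length ys" "P (ys ! j)" "y = ys ! j" by (auto simp: find_Some_iff)
  have yS: "y \<in> S" using j ysxs nth_mem by blast
  have "y = med xs"
    using rank_unique[OF assms(1) yS med_in(1)[OF assms(3) ne]] j Pm unfolding P_def xs(1) by simp
  then show ?thesis using y unfolding proc_output_def ys_def P_def by simp
qed



lemma rotate_count:
  assumes "finite S" "k + m \<le> card S"
  shows "card {xs \<in> permutations_of_set S. Q (set (take m (drop k xs)))}
       \<le> card {xs \<in> permutations_of_set S. Q (set (take m xs))}"
proof (cases "m = 0")
  case True then show ?thesis by simp
next
  case False
  let ?d = "card S"
  have k: "k < ?d" using False assms by simp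
  have len: "\<And>xs. xs \<in> permutations_of_set S \<Longrightarrow> length xs = ?d"
    by (rule length_finite_permutations_of_set)
  show ?thesis
  proof (rule card_inj_on_le[where f = "rotate k"])
    show "inj_on (rotate k) {xs \<in> permutations_of_set S. Q (set (take m (drop k xs)))}"
    proof (rule inj_onI)
      fix xs ys assume xs: "xs \<in> {xs \<in> permutations_of_set S. Q (set (take m (drop k xs)))}"
        and ys: "ys \<in> {xs \<in> permutations_of_set S. Q (set (take m (drop k xs)))}"
        and e: "rotate k xs = rotate k ys"
      have "rotate (?d - k) (rotate k xs) = rotate (?d - k) (rotate k ys)" using e by simp
      then have "rotate ?d xs = rotate ?d ys" using k by (simp add: rotate_rotate)
      then show "xs = ys" using len xs ys by (simp add: rotate_id)
    qed
  next
    show "rotate k ` {xs \<in> permutations_of_set S. Q (set (take m (drop k xs)))}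
        \<subseteq> {xs \<in> permutations_of_set S. Q (set (take m xs))}"
    proof
      fix zs assume "zs \<in> rotate k ` {xs \<in> permutations_of_set S. Q (set (take m (drop k xs)))}"
      then obtain xs where xs: "xs \<in> permutations_of_set S" "Q (set (take m (drop k xs)))" "zs = rotate k xs"
        by auto
      have l: "length xs = ?d" using len xs by simp
      have "take m (rotate k xs) = take m (drop k xs)"
        using l k assms(2) by (simp add: rotate_drop_take)
      moreover have "rotate k xs \<in> permutations_of_set S"
        using xs(1) by (auto simp: permutations_of_set_def)
      ultimately show "zs \<in> {xs \<in> permutations_of_set S. Q (set (take m xs))}" using xs by simp
    qed
  qed simp
qed

lemma asym:
  fixes D \<gamma> :: real
  assumes "\<gamma> > 0" "D \<ge> 1" "D powr \<gamma> \<ge> 36/\<gamma> + 21"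
  shows "8*D^2 \<le> exp (D powr (2*\<gamma>)/18)"
proof -
  define z where "z = D powr \<gamma>"
  have "36/\<gamma> > 0" using assms by simp
  then have z6: "z \<ge> 21" using assms(3) z_def by linarith
  have zz: "D powr (2*\<gamma>) = z^2" unfolding z_def
    by (simp add: power2_eq_square powr_add[symmetric])
  have lnD: "ln D \<le> z / \<gamma>"
  proof -
    have "ln z = \<gamma> * ln D" unfolding z_def using assms by (simp add: ln_powr)
    moreover have "ln z \<le> z - 1" using z6 by (intro ln_le_minus_one) auto
    ultimately have "\<gamma> * ln D \<le> z" by simp
    then show ?thesis using assms(1) by (simp add: field_simps)
  qed
  have ln8: "ln (8::real) \<le> 7" using ln_le_minus_one[of 8] by simp
  have "ln (8*D^2) = ln 8 + 2 * ln D" using assms by (simp add: ln_mult ln_realpow)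
  also have "\<dots> \<le> 7 + 2 * z / \<gamma>" using lnD ln8 by (simp add: divide_right_mono)
  also have "\<dots> \<le> z^2/18"
  proof -
    have "z * (2/\<gamma> + 7/6) \<le> z * z / 18"
    proof -
      have "2/\<gamma> + 7/6 \<le> z/18" using assms(3) z_def by (simp add: field_simps)
      then have "z * (2/\<gamma> + 7/6) \<le> z * (z/18)" using z6 by (intro mult_left_mono) auto
      then show ?thesis by simp
    qed
    note A = this
    have "7 \<le> z * 7/6" using z6 by simp
    then have "7 + 2*z/\<gamma> \<le> z*7/6 + 2*z/\<gamma>" by simp
    also have "\<dots> = z*(2/\<gamma>+7/6)" by (simp add: algebra_simps)
    also have "\<dots> \<le> z*z/18" by (rule A)
    also have "\<dots> = z^2/18" by (simp add: power2_eq_square)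
    finally show ?thesis .
  qed
  finally have "ln (8*D^2) \<le> D powr (2*\<gamma>)/18" using zz by simp
  then have "exp (ln (8*D^2)) \<le> exp (D powr (2*\<gamma>)/18)" by simp
  then show ?thesis using assms by simp
qed

lemma E_bound:
  fixes D \<gamma> m t :: real
  assumes "D \<ge> 1" "m + 1 \<le> 2 * D powr (2/3)" "t = D powr (1/3+\<gamma>)" "m \<ge> 0"
  shows "exp (-(2*t^2)/(9*(m+1))) \<le> exp (-(D powr (2*\<gamma>))/9)"
proof -
  have tt: "t^2 = D powr (2/3) * D powr (2*\<gamma>)" unfolding assms(3)
    by (simp add: power2_eq_square powr_add[symmetric] algebra_simps)
  have p: "D powr (2/3) > 0" "D powr (2*\<gamma>) > 0" using assms by auto
  have "(2*t^2)/(9*(m+1)) \<ge> (2*t^2)/(9*(2 * D powr (2/3)))"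
    using assms p tt by (intro divide_left_mono) auto
  moreover have "(2*t^2)/(9*(2 * D powr (2/3))) = D powr (2*\<gamma>)/9" using tt p by (simp add: field_simps)
  ultimately show ?thesis by simp
qed



lemma fail_cases:
  fixes S :: "real set"
  assumes xsP: "xs \<in> permutations_of_set S" and ns: "\<not> successful \<gamma> xs"
    and d1: "card S \<ge> 1" and m1: "blksz (card S) \<ge> 1"
    and Ldef: "L = {u \<in> S. u < sorted_list_of_set S ! ((card S - 1) div 2)}"
  shows "\<exists>i. i + 1 < nblocks (card S) \<and>
     (nat (win_hi \<gamma> (card S)) \<le> card (L \<inter> set (take (blksz (card S)) (drop (i * blksz (card S)) xs)))
      \<or> nat (int (blksz (card S)) + 2 - win_lo \<gamma> (card S))
           \<le> card ((S - L) \<inter> set (take (blksz (card S)) (drop (i * blksz (card S)) xs))))"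
proof -
  define d where "d = card S"
  define m where "m = blksz d"
  define q where "q = nblocks d"
  have xs: "set xs = S" "distinct xs" using xsP by (auto simp: permutations_of_set_def)
  have fS: "finite S" using xs by auto
  have len: "length xs = d" unfolding d_def using xs distinct_card by metis
  have ne: "xs \<noteq> []" using len d1 d_def by auto
  define M where "M = med xs"
  have MS: "M \<in> S" unfolding M_def by (rule med_in(1)[OF xsP ne])
  have MLeq: "L = {u \<in> S. u < M}" unfolding Ldef M_def med_perm[OF xsP] ..
  obtain p where p: "p < d" "xs ! p = M" using MS xs(1) len by (metis in_set_conv_nth)
  define i where "i = p div m"
  have m0: "m > 0" using m1 m_def d_def by simp
  have iq: "i < q"
  proof -
    have "p div m \<le> (d - 1) div m" using p by (intro div_le_mono) auto
    also have "(d - 1) div m < (d - 1 + m) div m" using m0 by simp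
    also have "d - 1 + m = d + m - 1" using d1 d_def by simp
    finally show ?thesis unfolding i_def q_def nblocks_def m_def .
  qed
  have blk: "blk xs i = take m (drop (i*m) xs)" unfolding blk_def len m_def ..
  have pm: "p = i*m + p mod m" unfolding i_def by simp
  have "p mod m < m" using m0 by simp
  then have im: "i*m \<le> p" "p < i*m + m" using pm by linarith+
  have MB: "M \<in> set (blk xs i)"
  proof -
    have "take m (drop (i*m) xs) ! (p - i*m) = xs ! p" using im p len by simp
    moreover have "p - i*m < length (take m (drop (i*m) xs))" using im p len by simp linarith
    ultimately show ?thesis unfolding blk using p(2) by (metis nth_mem)
  qed
  have notin: "M \<notin> set (yblk \<gamma> xs i)" using ns iq unfolding successful_def M_def q_def len by blast
  have iq1: "i + 1 \<noteq> q" using notin MB unfolding yblk_def len q_def by auto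
  then have iq2: "i + 1 < q" using iq by simp
  have nw: "\<not> (win_lo \<gamma> d \<le> int (rank_in (blk xs i) M) \<and> int (rank_in (blk xs i) M) \<le> win_hi \<gamma> d)"
    using notin MB iq1 unfolding yblk_def len q_def by auto
  have im2: "i*m + m \<le> d"
  proof -
    have "i + 2 \<le> (d + m - 1) div m" using iq2 unfolding q_def nblocks_def m_def by simp
    then have "(i + 2) * m \<le> d + m - 1" using m0 by (simp add: less_eq_div_iff_mult_less_eq)
    then show ?thesis by (simp add: algebra_simps)
  qed
  define B where "B = set (blk xs i)"
  have BS: "B \<subseteq> S" unfolding B_def using set_blk xs by blast
  have cB: "card B = m"
  proof -
    have "distinct (blk xs i)" unfolding blk using xs by (simp add: distinct_drop distinct_take)
    then have "card B = length (blk xs i)" unfolding B_def by (rule distinct_card)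
    also have "\<dots> = m" unfolding blk using im2 len by simp
    finally show ?thesis .
  qed
  have fB: "finite B" unfolding B_def by simp
  have rk: "rank_in (blk xs i) M = 1 + card (L \<inter> B)"
  proof -
    have "{u \<in> set (blk xs i). u \<le> M} = insert M (L \<inter> B)"
      using MB BS unfolding MLeq B_def by auto
    moreover have "M \<notin> L \<inter> B" unfolding MLeq by auto
    ultimately show ?thesis unfolding rank_in_def using fB by simp
  qed
  have split: "card (L \<inter> B) + card ((S - L) \<inter> B) = m"
  proof -
    have "card B = card (L \<inter> B) + card ((S - L) \<inter> B)"
    proof -
      have "B = (L \<inter> B) \<union> ((S - L) \<inter> B)" using BS by blast
      moreover have "(L \<inter> B) \<inter> ((S - L) \<inter> B) = {}" by blast
      ultimately show ?thesis using fB by (metis card_Un_disjoint finite_Int)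
    qed
    then show ?thesis using cB by simp
  qed
  have disj: "nat (win_hi \<gamma> d) \<le> card (L \<inter> B) \<or> nat (int m + 2 - win_lo \<gamma> d) \<le> card ((S - L) \<inter> B)"
    using nw split unfolding rk by auto
  show ?thesis using iq2 disj unfolding B_def blk q_def m_def d_def by blast
qed



lemma part1_bound:
  fixes \<gamma> :: real and S :: "real set"
  assumes g: "\<gamma> > 0" and fS: "finite S" and D125: "real (card S) \<ge> 125"
    and DZ: "real (card S) powr \<gamma> \<ge> 36/\<gamma> + 21"
  shows "real (card {xs \<in> permutations_of_set S. successful \<gamma> xs}) / real (card (permutations_of_set S))
              \<ge> 1 - exp (- (1/18) * real (card S) powr (2 * \<gamma>))"
proof -
  define d where "d = card S"
  define D where "D = real d"
  define m where "m = blksz d"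
  define q where "q = nblocks d"
  define t where "t = D powr (1/3 + \<gamma>)"
  define k where "k = (d - 1) div 2"
  define Low where "Low = {u \<in> S. u < sorted_list_of_set S ! k}"
  define P where "P = permutations_of_set S"
  define aU where "aU = nat (win_hi \<gamma> d)"
  define aV where "aV = nat (int m + 2 - win_lo \<gamma> d)"
  define E where "E = exp (-(2*t^2)/(9*(real m+1)))"
  define Bd where "Bd = fact d * (real m + 1) * E"
  have D1: "D \<ge> 125" using D125 unfolding D_def d_def .
  have d1: "d \<ge> 1" using D1 unfolding D_def by simp
  have c13: "D powr (1/3) \<ge> 5"
  proof -
    have "(125::real) powr (1/3) = 5"
    proof -
      have "(125::real) = 5 powr 3" by (simp add: powr_numeral)
      then show ?thesis by (simp add: powr_powr)
    qed
    moreover have "(125::real) powr (1/3) \<le> D powr (1/3)" using D1 by (intro powr_mono2) auto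
    ultimately show ?thesis by simp
  qed
  have c23: "D powr (2/3) = D powr (1/3) * D powr (1/3)" by (simp add: powr_add[symmetric])
  have "5*5 \<le> D powr (1/3) * D powr (1/3)" using c13 by (intro mult_mono) auto
  then have c23b: "D powr (2/3) \<ge> 25" using c23 by simp
  have c23c: "D powr (2/3) \<le> D" using D1 powr_mono[of "2/3" 1 D] by simp
  have "D powr (1/3) \<le> D powr (1/3+\<gamma>)" using D1 g by (intro powr_mono) auto
  then have t5: "t \<ge> 5" unfolding t_def using c13 by linarith
  have mreal: "real m = of_int \<lceil>D powr (2/3)\<rceil>" unfolding m_def blksz_def D_def
    by (simp add: ceiling_le_zero)
  have ml: "real m \<ge> D powr (2/3)" "real m < D powr (2/3) + 1" unfolding mreal by linarith+
  have m1: "m \<ge> 1" using ml c23b by simp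
  have md: "m \<le> d"
  proof -
    have "\<lceil>D powr (2/3)\<rceil> \<le> int d" unfolding ceiling_le_iff using c23c D_def by simp
    then show ?thesis unfolding m_def blksz_def D_def by (simp add: nat_le_iff)
  qed
  have md'': "m \<le> card S" using md unfolding d_def .
  have mD: "real m + 1 \<le> 2 * D powr (2/3)" using ml c23b by linarith
  have qd: "real q \<le> 2 * D"
  proof -
    have "q \<le> d + m - 1" unfolding q_def nblocks_def m_def by (rule div_le_dividend)
    then show ?thesis using md unfolding D_def by linarith
  qed
  have kd: "k < d" unfolding k_def using d1 by simp
  have cLow: "card Low = k" unfolding Low_def d_def using sorted_rank[OF fS] kd d_def by simp
  have LowS: "Low \<subseteq> S" unfolding Low_def by auto
  have cHigh: "card (S - Low) = d - k" using cLow LowS fS unfolding d_def by (simp add: card_Diff_subset finite_subset)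
  have SSL: "S - (S - Low) = Low" using LowS by auto
  have aUb: "real aU \<ge> (real m - 1)/2 + t"
  proof -
    have "real_of_int (win_hi \<gamma> d) \<ge> D powr (2/3)/2 + t"
      unfolding win_hi_def t_def D_def by linarith
    note h = this
    have "D powr (2/3) \<ge> 0" by simp
    then have "real_of_int (win_hi \<gamma> d) \<ge> 0" using h t5 by linarith
    then have "win_hi \<gamma> d \<ge> 0" by simp
    then have "real aU = real_of_int (win_hi \<gamma> d)" unfolding aU_def by simp
    then show ?thesis using h ml by (simp add: field_simps)
  qed
  have aVb: "real aV \<ge> (real m - 1)/2 + t"
  proof -
    have "real_of_int (win_lo \<gamma> d) \<le> D powr (2/3)/2 - t"
      unfolding win_lo_def t_def D_def by linarith
    note h = this
    have e: "(real m - 1)/2 = real m/2 - 1/2" by simp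
    have p: "D powr (2/3) \<ge> 0" by simp
    have r: "real_of_int (int m + 2 - win_lo \<gamma> d) = real m + 2 - real_of_int (win_lo \<gamma> d)" by simp
    have h2: "real m + 2 - real_of_int (win_lo \<gamma> d) \<ge> (real m - 1)/2 + t" using h ml e by linarith
    have "real_of_int (int m + 2 - win_lo \<gamma> d) \<ge> 0" using r h ml t5 p by linarith
    then have "int m + 2 - win_lo \<gamma> d \<ge> 0" by simp
    then have "real aV = real_of_int (int m + 2 - win_lo \<gamma> d)" unfolding aV_def by simp
    then show ?thesis using h2 r by simp
  qed
  define UU where "UU = (\<lambda>i. {xs \<in> P. aU \<le> card (Low \<inter> set (take m (drop (i*m) xs)))})"
  define VV where "VV = (\<lambda>i. {xs \<in> P. aV \<le> card ((S - Low) \<inter> set (take m (drop (i*m) xs)))})"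
  define I where "I = {i. i + 1 < q}"
  have finI: "finite I" unfolding I_def by (rule finite_subset[of _ "{..<q}"]) auto
  have cI: "card I \<le> q" unfolding I_def by (rule order.trans[OF card_mono[of "{..<q}"]]) auto
  have Fsub: "{xs \<in> P. \<not> successful \<gamma> xs} \<subseteq> (\<Union>i\<in>I. UU i \<union> VV i)"
  proof
    fix xs assume "xs \<in> {xs \<in> P. \<not> successful \<gamma> xs}"
    then have xs: "xs \<in> P" "\<not> successful \<gamma> xs" by auto
    have cm1: "blksz (card S) \<ge> 1" using m1 unfolding m_def d_def .
    have cs1: "card S \<ge> 1" using d1 unfolding d_def .
    have Lw: "Low = {u \<in> S. u < sorted_list_of_set S ! ((card S - 1) div 2)}"
      unfolding Low_def k_def d_def ..
    note fc = fail_cases[OF xs(1)[unfolded P_def] xs(2) cs1 cm1 Lw]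
    obtain i where "i + 1 < q" "aU \<le> card (Low \<inter> set (take m (drop (i * m) xs)))
         \<or> aV \<le> card ((S - Low) \<inter> set (take m (drop (i * m) xs)))"
      using fc unfolding q_def m_def d_def aU_def aV_def by blast
    then show "xs \<in> (\<Union>i\<in>I. UU i \<union> VV i)" using xs unfolding I_def UU_def VV_def by auto
  qed
  have blkfit: "i*m + m \<le> d" if "i \<in> I" for i
  proof -
    have "i + 2 \<le> (d + m - 1) div m" using that unfolding I_def q_def nblocks_def m_def by simp
    then have "(i + 2) * m \<le> d + m - 1" using m1 by (simp add: less_eq_div_iff_mult_less_eq)
    then show ?thesis by (simp add: algebra_simps)
  qed
  have UUb: "real (card (UU i)) \<le> Bd" if "i \<in> I" for i
  proof -
    have "card (UU i) \<le> card {xs \<in> P. aU \<le> card (Low \<inter> set (take m xs))}"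
      unfolding UU_def P_def using rotate_count[OF fS, of "i*m" m] blkfit[OF that] d_def by simp
    moreover have "real (card {xs \<in> P. aU \<le> card (Low \<inter> set (take m xs))}) \<le> Bd"
    proof -
      have kb: "k \<le> d - k + 2" unfolding k_def by presburger
      have kk: "card Low \<le> card (S - Low) + 2" using cLow cHigh kb by simp
      have "real (card {xs \<in> P. aU \<le> card (Low \<inter> set (take m xs))})
          \<le> fact (card S) * (real m + 1) * exp (-(2*t^2)/(9*(real m+1)))"
        unfolding P_def by (rule tail_perm[OF fS LowS kk md'' t5 aUb])
      then show ?thesis unfolding Bd_def E_def d_def by simp
    qed
    ultimately show ?thesis by linarith
  qed
  have VVb: "real (card (VV i)) \<le> Bd" if "i \<in> I" for i
  proof -
    have "card (VV i) \<le> card {xs \<in> P. aV \<le> card ((S - Low) \<inter> set (take m xs))}"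
      unfolding VV_def P_def using rotate_count[OF fS, of "i*m" m] blkfit[OF that] d_def by simp
    moreover have "real (card {xs \<in> P. aV \<le> card ((S - Low) \<inter> set (take m xs))}) \<le> Bd"
    proof -
      have kb: "d - k \<le> k + 2" unfolding k_def by presburger
      have kk: "card (S - Low) \<le> card (S - (S - Low)) + 2" unfolding SSL using cLow cHigh kb by simp
      have "real (card {xs \<in> P. aV \<le> card ((S - Low) \<inter> set (take m xs))})
          \<le> fact (card S) * (real m + 1) * exp (-(2*t^2)/(9*(real m+1)))"
        unfolding P_def by (rule tail_perm[OF fS _ kk md'' t5 aVb]) auto
      then show ?thesis unfolding Bd_def E_def d_def by simp
    qed
    ultimately show ?thesis by linarith
  qed
  have finP: "finite P" unfolding P_def by simp
  have "real (card {xs \<in> P. \<not> successful \<gamma> xs}) \<le> real (card (\<Union>i\<in>I. UU i \<union> VV i))"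
  proof -
    have "(\<Union>i\<in>I. UU i \<union> VV i) \<subseteq> P" unfolding UU_def VV_def by auto
    then have "finite (\<Union>i\<in>I. UU i \<union> VV i)" using finP by (rule finite_subset)
    then show ?thesis using Fsub by (intro of_nat_mono card_mono) auto
  qed
  also have "\<dots> \<le> real (\<Sum>i\<in>I. card (UU i \<union> VV i))" by (intro of_nat_mono card_UN_le finI)
  also have "\<dots> \<le> (\<Sum>i\<in>I. 2 * Bd)"
    unfolding of_nat_sum
  proof (rule sum_mono)
    fix i assume i: "i \<in> I"
    have "card (UU i \<union> VV i) \<le> card (UU i) + card (VV i)" by (rule card_Un_le)
    then have "real (card (UU i \<union> VV i)) \<le> real (card (UU i)) + real (card (VV i))" by linarith
    then show "real (card (UU i \<union> VV i)) \<le> 2 * Bd" using UUb[OF i] VVb[OF i] by linarith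
  qed
  also have "\<dots> = card I * (2 * Bd)" by simp
  also have "\<dots> \<le> (2 * D) * (2 * Bd)"
    using cI qd unfolding Bd_def E_def by (intro mult_right_mono) auto
  also have "\<dots> \<le> fact d * (8 * D^2 * exp (-(D powr (2*\<gamma>))/9))"
  proof -
    have e: "E \<le> exp (-(D powr (2*\<gamma>))/9)" unfolding E_def
      by (rule E_bound[OF _ mD _]) (use D1 t_def in auto)
    have "real m + 1 \<le> 2 * D" using mD c23c by linarith
    note mm = this
    have pos: "0 \<le> 4*D*fact d*E" unfolding E_def using D1 by simp
    have "(2 * D) * (2 * Bd) = (4*D*fact d*E) * (real m + 1)" unfolding Bd_def by (simp add: algebra_simps)
    also have "\<dots> \<le> (4*D*fact d*E) * (2 * D)" using mm pos by (rule mult_left_mono)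
    also have "\<dots> = fact d * (8 * D^2 * E)" by (simp add: algebra_simps power2_eq_square)
    finally have "(2 * D) * (2 * Bd) \<le> fact d * (8 * D^2 * E)" .
    also have "\<dots> \<le> fact d * (8 * D^2 * exp (-(D powr (2*\<gamma>))/9))"
      using e by (intro mult_left_mono) auto
    finally show ?thesis .
  qed
  also have "\<dots> \<le> fact d * exp (-(1/18) * D powr (2*\<gamma>))"
  proof -
    have a: "8 * D^2 \<le> exp (D powr (2*\<gamma>)/18)"
      by (rule asym[OF g]) (use D1 DZ D_def d_def in auto)
    have "8 * D^2 * exp (-(D powr (2*\<gamma>))/9) \<le> exp (D powr (2*\<gamma>)/18) * exp (-(D powr (2*\<gamma>))/9)"
      using a by (intro mult_right_mono) auto
    also have "\<dots> = exp (-(1/18) * D powr (2*\<gamma>))" by (simp add: exp_add[symmetric])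
    finally show ?thesis by (intro mult_left_mono) auto
  qed
  finally have Fb: "real (card {xs \<in> P. \<not> successful \<gamma> xs}) \<le> fact d * exp (-(1/18) * D powr (2*\<gamma>))" .
  have cP: "card P = card {xs \<in> P. successful \<gamma> xs} + card {xs \<in> P. \<not> successful \<gamma> xs}"
  proof -
    have "P = {xs \<in> P. successful \<gamma> xs} \<union> {xs \<in> P. \<not> successful \<gamma> xs}" by auto
    then have "card P = card ({xs \<in> P. successful \<gamma> xs} \<union> {xs \<in> P. \<not> successful \<gamma> xs})" by simp
    also have "\<dots> = card {xs \<in> P. successful \<gamma> xs} + card {xs \<in> P. \<not> successful \<gamma> xs}"
      by (rule card_Un_disjoint) (use finP in auto)
    finally show ?thesis .
  qed
  have cPd: "card P = fact d" unfolding P_def d_def using fS by simp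
  have fpos: "(fact d :: real) > 0" by simp
  have "real (card {xs \<in> P. successful \<gamma> xs}) = fact d - real (card {xs \<in> P. \<not> successful \<gamma> xs})"
  proof -
    have a: "real (card P) = real (card {xs \<in> P. successful \<gamma> xs}) + real (card {xs \<in> P. \<not> successful \<gamma> xs})"
      using cP by simp
    have b: "real (card P) = fact d" using cPd by simp
    show ?thesis using a b by linarith
  qed
  then have "real (card {xs \<in> P. successful \<gamma> xs}) / fact d \<ge> 1 - exp (-(1/18) * D powr (2*\<gamma>))"
    using Fb fpos by (simp add: field_simps)
  then show ?thesis unfolding P_def D_def d_def using cPd[unfolded P_def d_def] by simp
qed

theorem propositionC2:
  fixes \<gamma> :: real
  assumes "\<gamma> > 0"
  shows "(\<exists>c > 0. \<exists>d0 :: nat. \<forall>d \<ge> d0. \<forall>S :: real set.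
            finite S \<and> S \<subseteq> {0<..<1} \<and> card S = d \<longrightarrow>
              real (card {xs \<in> permutations_of_set S. successful \<gamma> xs})
                / real (card (permutations_of_set S))
              \<ge> 1 - exp (- c * real d powr (2 * \<gamma>)))
         \<and> (\<forall>S :: real set. \<forall>xs. finite S \<and> S \<subseteq> {0<..<1} \<and> xs \<in> permutations_of_set S
              \<and> successful \<gamma> xs \<longrightarrow> proc_output \<gamma> xs = Some (med xs))"
proof
  define Z where "Z = 36/\<gamma> + 21"
  define d0 where "d0 = nat \<lceil>max 125 (Z powr (1/\<gamma>))\<rceil>"
  have "36/\<gamma> > 0" using assms by simp
  then have Z0: "Z > 0" unfolding Z_def by linarith
  show "\<exists>c > 0. \<exists>d0 :: nat. \<forall>d \<ge> d0. \<forall>S :: real set.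
            finite S \<and> S \<subseteq> {0<..<1} \<and> card S = d \<longrightarrow>
              real (card {xs \<in> permutations_of_set S. successful \<gamma> xs})
                / real (card (permutations_of_set S))
              \<ge> 1 - exp (- c * real d powr (2 * \<gamma>))"
  proof (intro exI[of _ "1/18"] conjI exI[of _ d0] allI impI)
    fix d :: nat and S :: "real set"
    assume d: "d0 \<le> d" and S: "finite S \<and> S \<subseteq> {0<..<1} \<and> card S = d"
    have D1: "real d \<ge> max 125 (Z powr (1/\<gamma>))" using d unfolding d0_def by linarith
    have "real d powr \<gamma> \<ge> (Z powr (1/\<gamma>)) powr \<gamma>"
      using D1 assms by (intro powr_mono2) auto
    also have "(Z powr (1/\<gamma>)) powr \<gamma> = Z" using Z0 assms by (simp add: powr_powr)
    finally have DZ: "real d powr \<gamma> \<ge> 36/\<gamma> + 21" unfolding Z_def .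
    show "real (card {xs \<in> permutations_of_set S. successful \<gamma> xs})
                / real (card (permutations_of_set S))
              \<ge> 1 - exp (- (1/18) * real d powr (2 * \<gamma>))"
      using part1_bound[OF assms, of S] S D1 DZ by simp
  qed simp
next
  show "\<forall>S :: real set. \<forall>xs. finite S \<and> S \<subseteq> {0<..<1} \<and> xs \<in> permutations_of_set S
              \<and> successful \<gamma> xs \<longrightarrow> proc_output \<gamma> xs = Some (med xs)"
    using part2 by blast
qed

end
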